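(* Let $K\subseteq\mathbb R^n$ be a convex body and let $u\in S^{n-1}$. Then \[ S_u(K^c)\subseteq \mathrm{conv}_c(S_u(K^c))\subseteq (S_uK)^c. \] In particular $\mathrm{Vol}(K^c)\le \mathrm{Vol}((S_uK)^c)$.
   Context: For $x\in\mathbb R^n$, $B(x,1)$ is the closed Euclidean unit ball centered at $x$. For $A\subseteq\mathbb R^n$, $A^c=\bigcap_{x\in A}B(x,1)$ is its $c$-dual and $\mathrm{conv}_c(A)=A^{cc}$ its $c$-hull. For a compact convex set $K$ and $u\in S^{n-1}$, for each $x$ in the orthogonal projection $P_{u^\perp}(K)$ write $K\cap(x+\mathbb Ru)=[x+a(x)u,x+b(x)u]$; the Steiner symmetral is $S_u(K)=\{x+yu: x\in P_{u^\perp}(K),\ |y|\le |b(x)-a(x)|/2\}$ (and $S_u(\emptyset)=\emptyset$). *)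

theory Defs
  imports "HOL-Analysis.Analysis"
begin

text \<open>c-dual: intersection of closed unit balls centred at points of A
  (the empty intersection is the whole space).\<close>
definition cdual :: "'a::euclidean_space set \<Rightarrow> 'a set" where
  "cdual A = (\<Inter>x\<in>A. cball x 1)"

definition chull :: "'a::euclidean_space set \<Rightarrow> 'a set" where
  "chull A = cdual (cdual A)"

definition proj_perp :: "'a::euclidean_space \<Rightarrow> 'a \<Rightarrow> 'a" where
  "proj_perp u z = z - (z \<bullet> u) *\<^sub>R u"

text \<open>Steiner symmetral in direction u (u a unit vector, K compact convex):
  for x in the projection of K, the chord K \<inter> (x + R u) is
  [x + a(x) u, x + b(x) u] with a(x) = Inf, b(x) = Sup of the parameter set.\<close>
definition steiner :: "'a::euclidean_space \<Rightarrow> 'a set \<Rightarrow> 'a set" where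
  "steiner u K = {x + y *\<^sub>R u | x y. x \<in> proj_perp u ` K \<and>
      \<bar>y\<bar> \<le> \<bar>Sup {t. x + t *\<^sub>R u \<in> K} - Inf {t. x + t *\<^sub>R u \<in> K}\<bar> / 2}"

end

theory Submission imports Defs "HOL-Analysis.Analysis" begin


lemma fubini_dir:
  fixes b :: "'a::euclidean_space"
  assumes b: "b \<in> Basis" and A[measurable]: "A \<in> sets borel"
  shows "emeasure lborel A = (\<integral>\<^sup>+x. (\<integral>\<^sup>+y. indicator A ((\<Sum>b'\<in>Basis-{b}. x b' *\<^sub>R b') + y *\<^sub>R b) \<partial>lborel) \<partial>(\<Pi>\<^sub>M b'\<in>Basis-{b}. lborel))"
proof -
  interpret product_sigma_finite "\<lambda>_. (lborel::real measure)" by standard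
  have ins: "insert b (Basis - {b}) = (Basis::'a set)" using b by auto
  have Smeas[measurable]: "(\<lambda>f. \<Sum>b\<in>Basis. f b *\<^sub>R (b::'a)) \<in> borel_measurable (\<Pi>\<^sub>M b\<in>Basis. lborel)"
    by measurable
  have "emeasure lborel A = (\<integral>\<^sup>+w. indicator A w \<partial>lborel)" by simp
  also have "\<dots> = (\<integral>\<^sup>+f. indicator A (\<Sum>b\<in>Basis. f b *\<^sub>R (b::'a)) \<partial>(\<Pi>\<^sub>M b\<in>Basis. lborel))"
    by (subst lborel_eq, subst nn_integral_distr[OF Smeas]) auto
  also have "\<dots> = (\<integral>\<^sup>+f. indicator A (\<Sum>b\<in>Basis. f b *\<^sub>R (b::'a)) \<partial>(\<Pi>\<^sub>M b\<in>insert b (Basis - {b}). lborel))"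
    by (simp only: ins)
  also have "\<dots> = (\<integral>\<^sup>+x. (\<integral>\<^sup>+y. indicator A (\<Sum>b'\<in>Basis. (x(b:=y)) b' *\<^sub>R (b'::'a)) \<partial>lborel) \<partial>(\<Pi>\<^sub>M b'\<in>Basis-{b}. lborel))"
    by (rule product_nn_integral_insert) (auto simp: ins)
  also have "\<dots> = (\<integral>\<^sup>+x. (\<integral>\<^sup>+y. indicator A ((\<Sum>b'\<in>Basis-{b}. x b' *\<^sub>R b') + y *\<^sub>R b) \<partial>lborel) \<partial>(\<Pi>\<^sub>M b'\<in>Basis-{b}. lborel))"
  proof -
    have "(\<Sum>b'\<in>Basis. (x(b:=y)) b' *\<^sub>R (b'::'a)) = (\<Sum>b'\<in>Basis-{b}. x b' *\<^sub>R b') + y *\<^sub>R b" for x y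
    proof -
      have "(\<Sum>b'\<in>Basis. (x(b:=y)) b' *\<^sub>R (b'::'a)) = (x(b:=y)) b *\<^sub>R b + (\<Sum>b'\<in>Basis-{b}. (x(b:=y)) b' *\<^sub>R b')"
        using b by (simp add: sum.remove)
      also have "(\<Sum>b'\<in>Basis-{b}. (x(b:=y)) b' *\<^sub>R b') = (\<Sum>b'\<in>Basis-{b}. x b' *\<^sub>R b')"
        by (rule sum.cong) auto
      finally show ?thesis by simp
    qed
    then show ?thesis by simp
  qed
  finally show ?thesis .
qed


lemma shear_basis:
  fixes b :: "'a::euclidean_space"
  assumes b: "b \<in> Basis" and g[measurable]: "g \<in> borel_measurable borel"
    and ginv: "\<And>w t. g (w + t *\<^sub>R b) = g w" and E[measurable]: "E \<in> sets borel"
  shows "emeasure lborel ((\<lambda>w. w + g w *\<^sub>R b) -` E) = emeasure lborel E"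
proof -
  have P[measurable]: "(\<lambda>w. w + g w *\<^sub>R b) -` E \<in> sets borel"
    using measurable_sets_borel[of "\<lambda>w. w + g w *\<^sub>R b" borel E] by measurable
  show ?thesis
    unfolding fubini_dir[OF b P] fubini_dir[OF b E]
  proof (rule nn_integral_cong)
    fix x :: "'a \<Rightarrow> real"
    define z where "z = (\<Sum>b'\<in>Basis-{b}. x b' *\<^sub>R b')"
    have 1: "indicator ((\<lambda>w. w + g w *\<^sub>R b) -` E) (z + y *\<^sub>R b) = indicator E (z + (g z + y) *\<^sub>R b)" for y :: real
      using ginv[of z y] by (simp add: indicator_def algebra_simps)
    have m: "(\<lambda>y. indicator E (z + y *\<^sub>R b) :: ennreal) \<in> borel_measurable borel" by measurable
    have "(\<integral>\<^sup>+y. indicator E (z + y *\<^sub>R b) \<partial>lborel) = ennreal \<bar>1::real\<bar> * (\<integral>\<^sup>+y. indicator E (z + (g z + 1 * y) *\<^sub>R b) \<partial>lborel)"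
      by (rule nn_integral_real_affine[OF m]) simp
    then show "(\<integral>\<^sup>+y. indicator ((\<lambda>w. w + g w *\<^sub>R b) -` E) ((\<Sum>b'\<in>Basis-{b}. x b' *\<^sub>R b') + y *\<^sub>R b) \<partial>lborel)
        = (\<integral>\<^sup>+y. indicator E ((\<Sum>b'\<in>Basis-{b}. x b' *\<^sub>R b') + y *\<^sub>R b) \<partial>lborel)"
      unfolding z_def[symmetric] 1 by simp
  qed
qed


lemma shear_multi:
  fixes b0 :: "'a::euclidean_space"
  assumes b0: "b0 \<in> Basis" and fin: "finite B" and B: "B \<subseteq> Basis - {b0}"
    and E: "E \<in> sets borel"
  shows "emeasure lborel ((\<lambda>w. w + (\<Sum>b\<in>B. ((w \<bullet> b0) * a b) *\<^sub>R b)) -` E) = emeasure lborel E"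
  using fin B E
proof (induction B arbitrary: E rule: finite_induct)
  case empty
  then show ?case by simp
next
  case (insert b B)
  have E[measurable]: "E \<in> sets borel" using insert.prems by auto
  have bB: "b \<in> Basis" "b \<noteq> b0" using insert.prems by auto
  have orth: "b \<bullet> b0 = 0" using bB b0 by (simp add: inner_Basis)
  define \<sigma> where "\<sigma> = (\<lambda>v::'a. v + ((v \<bullet> b0) * a b) *\<^sub>R b)"
  have Bsub: "B \<subseteq> Basis - {b0}" using insert.prems by auto
  have inB: "(\<Sum>b'\<in>B. ((w \<bullet> b0) * a b') *\<^sub>R b') \<bullet> b0 = 0" for w
  proof -
    have "\<forall>b'\<in>B. b' \<bullet> b0 = 0" using Bsub b0 by (metis DiffE inner_not_same_Basis insertCI subsetD)
    then show ?thesis by (simp add: inner_sum_left)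
  qed
  have eq: "(\<lambda>w. w + (\<Sum>b'\<in>insert b B. ((w \<bullet> b0) * a b') *\<^sub>R b')) -` E
      = (\<lambda>w. w + (\<Sum>b'\<in>B. ((w \<bullet> b0) * a b') *\<^sub>R b')) -` (\<sigma> -` E)"
    using insert.hyps inB by (auto simp: \<sigma>_def inner_add_left algebra_simps)
  have sm[measurable]: "\<sigma> \<in> borel_measurable borel" unfolding \<sigma>_def by measurable
  have sE: "\<sigma> -` E \<in> sets borel"
    using measurable_sets_borel[OF sm E] by simp
  have "emeasure lborel (\<sigma> -` E) = emeasure lborel E"
    unfolding \<sigma>_def
    by (rule shear_basis[OF bB(1) _ _ E]) (auto simp: inner_add_left orth)
  then show "emeasure lborel ((\<lambda>w. w + (\<Sum>b'\<in>insert b B. ((w \<bullet> b0) * a b') *\<^sub>R b')) -` E) = emeasure lborel E"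
    unfolding eq using insert.IH[OF Bsub sE] by simp
qed

lemma fiber_compare:
  fixes u :: "'a::euclidean_space"
  assumes u: "norm u = 1" and E[measurable]: "E \<in> sets borel" and F[measurable]: "F \<in> sets borel"
    and fib: "\<And>z. emeasure lborel {t. z + t *\<^sub>R u \<in> E} \<le> emeasure lborel {t. z + t *\<^sub>R u \<in> F}"
  shows "emeasure lborel E \<le> emeasure lborel F"
proof -
  have "u \<noteq> 0" using u by auto
  then obtain b0 where b0: "b0 \<in> Basis" and c0: "u \<bullet> b0 \<noteq> 0"
    using euclidean_all_zero_iff by blast
  define c where "c = u \<bullet> b0"
  define v where "v = u - c *\<^sub>R b0"
  have vb0: "v \<bullet> b0 = 0" using b0 by (simp add: v_def c_def inner_diff_left)
  have vrep: "v = (\<Sum>b\<in>Basis-{b0}. (v \<bullet> b) *\<^sub>R b)"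
  proof -
    have "v = (\<Sum>b\<in>Basis. (v \<bullet> b) *\<^sub>R b)" by (simp add: euclidean_representation)
    also have "\<dots> = (v \<bullet> b0) *\<^sub>R b0 + (\<Sum>b\<in>Basis-{b0}. (v \<bullet> b) *\<^sub>R b)"
      using b0 by (simp add: sum.remove)
    finally show ?thesis using vb0 by simp
  qed
  define a where "a = (\<lambda>b. (v \<bullet> b) / c)"
  define \<Psi> where "\<Psi> = (\<lambda>w. w + (\<Sum>b\<in>Basis-{b0}. ((w \<bullet> b0) * a b) *\<^sub>R b))"
  have Psi: "\<Psi> w = w + ((w \<bullet> b0) / c) *\<^sub>R v" for w
  proof -
    have "((w \<bullet> b0) / c) *\<^sub>R v = (\<Sum>b\<in>Basis-{b0}. ((w \<bullet> b0) / c) *\<^sub>R ((v \<bullet> b) *\<^sub>R b))"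
      by (subst vrep) (simp add: scaleR_sum_right)
    then show ?thesis by (simp add: \<Psi>_def a_def)
  qed
  define Z where "Z = (\<lambda>x. (\<Sum>b'\<in>Basis-{b0}. x b' *\<^sub>R b') :: 'a)"
  have Zb0: "Z x \<bullet> b0 = 0" for x
    using b0 by (auto simp: Z_def inner_sum_left inner_Basis intro!: sum.neutral)
  have PsiZ: "\<Psi> (Z x + y *\<^sub>R b0) = Z x + (y / c) *\<^sub>R u" for x y
    using b0 c0 unfolding Psi by (simp add: inner_add_left Zb0 v_def c_def algebra_simps)
  have key: "emeasure lborel G = (\<integral>\<^sup>+x. ennreal \<bar>c\<bar> * emeasure lborel {t. Z x + t *\<^sub>R u \<in> G} \<partial>(\<Pi>\<^sub>M b'\<in>Basis-{b0}. lborel))"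
    if G[measurable]: "G \<in> sets borel" for G
  proof -
    have pm[measurable]: "\<Psi> \<in> borel_measurable borel" unfolding \<Psi>_def by measurable
    have PG: "\<Psi> -` G \<in> sets borel" using measurable_sets_borel[OF pm G] by simp
    have "emeasure lborel G = emeasure lborel (\<Psi> -` G)"
      unfolding \<Psi>_def by (rule shear_multi[OF b0 _ _ G, symmetric]) auto
    also have "\<dots> = (\<integral>\<^sup>+x. (\<integral>\<^sup>+y. indicator (\<Psi> -` G) (Z x + y *\<^sub>R b0) \<partial>lborel) \<partial>(\<Pi>\<^sub>M b'\<in>Basis-{b0}. lborel))"
      unfolding Z_def by (rule fubini_dir[OF b0 PG])
    also have "\<dots> = (\<integral>\<^sup>+x. ennreal \<bar>c\<bar> * emeasure lborel {t. Z x + t *\<^sub>R u \<in> G} \<partial>(\<Pi>\<^sub>M b'\<in>Basis-{b0}. lborel))"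
    proof (rule nn_integral_cong)
      fix x :: "'a \<Rightarrow> real"
      have m: "(\<lambda>y. indicator G (Z x + (y / c) *\<^sub>R u) :: ennreal) \<in> borel_measurable borel" by measurable
      have "(\<integral>\<^sup>+y. indicator (\<Psi> -` G) (Z x + y *\<^sub>R b0) \<partial>lborel) = (\<integral>\<^sup>+y. indicator G (Z x + (y / c) *\<^sub>R u) \<partial>lborel)"
        by (simp add: indicator_def PsiZ)
      also have "\<dots> = ennreal \<bar>c\<bar> * (\<integral>\<^sup>+y. indicator G (Z x + ((0 + c * y) / c) *\<^sub>R u) \<partial>lborel)"
        by (rule nn_integral_real_affine[OF m]) (simp add: c_def c0)
      also have "(\<integral>\<^sup>+y. indicator G (Z x + ((0 + c * y) / c) *\<^sub>R u) \<partial>lborel) = (\<integral>\<^sup>+y. indicator {t. Z x + t *\<^sub>R u \<in> G} y \<partial>lborel)"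
        using c0 by (simp add: c_def indicator_def)
      also have "\<dots> = emeasure lborel {t. Z x + t *\<^sub>R u \<in> G}"
        by (rule nn_integral_indicator) measurable
      finally show "(\<integral>\<^sup>+y. indicator (\<Psi> -` G) (Z x + y *\<^sub>R b0) \<partial>lborel) = ennreal \<bar>c\<bar> * emeasure lborel {t. Z x + t *\<^sub>R u \<in> G}" .
    qed
    finally show ?thesis .
  qed
  show ?thesis
    unfolding key[OF E] key[OF F]
    by (rule nn_integral_mono) (intro mult_left_mono fib, simp)
qed


lemma chord_props:
  fixes u :: "'a::euclidean_space"
  assumes u: "norm u = 1" and A: "compact A" and a0: "a0 \<in> A"
  defines "x \<equiv> proj_perp u a0"
  defines "T \<equiv> {t. x + t *\<^sub>R u \<in> A}"
  shows "x \<bullet> u = 0" "Inf T \<in> T" "Sup T \<in> T" "Inf T \<le> Sup T" "T \<subseteq> {Inf T..Sup T}"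
proof -
  have uu: "u \<bullet> u = 1" using u by (simp add: dot_square_norm)
  show xu: "x \<bullet> u = 0" unfolding x_def proj_perp_def by (simp add: inner_diff_left uu)
  have inT: "a0 \<bullet> u \<in> T" unfolding T_def x_def proj_perp_def using a0 by simp
  have cl: "closed T"
  proof -
    have "T = (\<lambda>t. x + t *\<^sub>R u) -` A" unfolding T_def by auto
    moreover have "closed ((\<lambda>t. x + t *\<^sub>R u) -` A)"
      by (rule continuous_closed_vimage) (auto intro: compact_imp_closed A continuous_intros)
    ultimately show ?thesis by simp
  qed
  obtain R where R: "\<And>a. a \<in> A \<Longrightarrow> norm a \<le> R"
    using compact_imp_bounded[OF A] bounded_iff by metis
  have bd: "bounded T"
    unfolding bounded_iff
  proof (intro exI ballI)
    fix t assume "t \<in> T"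
    then have "norm (x + t *\<^sub>R u) \<le> R" using R unfolding T_def by auto
    moreover have "norm t = norm ((x + t *\<^sub>R u) - x)" using u by simp
    moreover have "norm ((x + t *\<^sub>R u) - x) \<le> norm (x + t *\<^sub>R u) + norm x" by (rule norm_triangle_ineq4)
    ultimately show "norm t \<le> R + norm x" by linarith
  qed
  have ne: "T \<noteq> {}" using inT by auto
  show S: "Sup T \<in> T" by (rule closed_contains_Sup[OF ne bounded_imp_bdd_above[OF bd] cl])
  show I: "Inf T \<in> T" by (rule closed_contains_Inf[OF ne bounded_imp_bdd_below[OF bd] cl])
  show sub: "T \<subseteq> {Inf T..Sup T}"
    using bounded_imp_bdd_above[OF bd] bounded_imp_bdd_below[OF bd]
    by (auto intro: cInf_lower cSup_upper)
  show "Inf T \<le> Sup T" using sub S by auto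
qed

lemma pyth_u:
  fixes u :: "'a::euclidean_space"
  assumes u: "norm u = 1" and "x \<bullet> u = 0" "x' \<bullet> u = 0"
  shows "(norm ((x + s *\<^sub>R u) - (x' + t *\<^sub>R u)))\<^sup>2 = (norm (x - x'))\<^sup>2 + (s - t)\<^sup>2"
proof -
  have e: "(x + s *\<^sub>R u) - (x' + t *\<^sub>R u) = (x - x') + (s - t) *\<^sub>R u" by (simp add: algebra_simps)
  have o: "(x - x') \<bullet> ((s - t) *\<^sub>R u) = 0" using assms by (simp add: inner_diff_left)
  have "(norm ((x - x') + (s - t) *\<^sub>R u))\<^sup>2 = (norm (x - x'))\<^sup>2 + (norm ((s - t) *\<^sub>R u))\<^sup>2"
    by (rule norm_add_Pythagorean) (unfold orthogonal_def, rule o)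
  also have "(norm ((s - t) *\<^sub>R u))\<^sup>2 = (s - t)\<^sup>2" using u by simp
  finally show ?thesis unfolding e .
qed

lemma arith_key:
  fixes D y y' iA sA iB sB :: real
  assumes "D + (sB - iA)\<^sup>2 \<le> 1" "D + (sA - iB)\<^sup>2 \<le> 1" "iA \<le> sA" "iB \<le> sB"
    "\<bar>y\<bar> \<le> \<bar>sA - iA\<bar> / 2" "\<bar>y'\<bar> \<le> \<bar>sB - iB\<bar> / 2"
  shows "D + (y - y')\<^sup>2 \<le> 1"
proof -
  have a1: "\<bar>sA - iA\<bar> = sA - iA" "\<bar>sB - iB\<bar> = sB - iB" using assms(3,4) by auto
  have "\<bar>y - y'\<bar> \<le> \<bar>y\<bar> + \<bar>y'\<bar>" by (rule abs_triangle_ineq4)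
  moreover have "\<bar>y\<bar> + \<bar>y'\<bar> \<le> ((sB - iA) + (sA - iB)) / 2" using assms(5,6) unfolding a1 by simp
  ultimately have h: "\<bar>y - y'\<bar> \<le> ((sB - iA) + (sA - iB)) / 2" by (rule order_trans)
  show ?thesis
  proof (cases "sB - iA \<le> sA - iB")
    case True
    then have "(sB - iA + (sA - iB)) / 2 \<le> sA - iB" by argo
    then have "\<bar>y - y'\<bar> \<le> sA - iB" using h by (rule order_trans[rotated])
    then have "\<bar>y - y'\<bar> \<le> \<bar>sA - iB\<bar>" using abs_ge_self order_trans by blast
    then have "\<bar>y - y'\<bar>\<^sup>2 \<le> \<bar>sA - iB\<bar>\<^sup>2" by (rule power_mono) simp
    then show ?thesis using assms(2) by simp
  next
    case False
    then have "(sB - iA + (sA - iB)) / 2 \<le> sB - iA" by argo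
    then have "\<bar>y - y'\<bar> \<le> sB - iA" using h by (rule order_trans[rotated])
    then have "\<bar>y - y'\<bar> \<le> \<bar>sB - iA\<bar>" using abs_ge_self order_trans by blast
    then have "\<bar>y - y'\<bar>\<^sup>2 \<le> \<bar>sB - iA\<bar>\<^sup>2" by (rule power_mono) simp
    then show ?thesis using assms(1) by simp
  qed
qed

lemma steiner_dist:
  fixes u :: "'a::euclidean_space"
  assumes u: "norm u = 1" and A: "compact A" and B: "compact B"
    and AB: "\<And>a b. a \<in> A \<Longrightarrow> b \<in> B \<Longrightarrow> dist a b \<le> 1"
    and p: "p \<in> steiner u A" and q: "q \<in> steiner u B"
  shows "dist p q \<le> 1"
proof -
  obtain x y a0 where px: "p = x + y *\<^sub>R u" and a0: "a0 \<in> A" and x: "x = proj_perp u a0"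
    and y: "\<bar>y\<bar> \<le> \<bar>Sup {t. x + t *\<^sub>R u \<in> A} - Inf {t. x + t *\<^sub>R u \<in> A}\<bar> / 2"
    using p unfolding steiner_def by auto
  obtain x' y' b0 where qx: "q = x' + y' *\<^sub>R u" and b0: "b0 \<in> B" and x': "x' = proj_perp u b0"
    and y': "\<bar>y'\<bar> \<le> \<bar>Sup {t. x' + t *\<^sub>R u \<in> B} - Inf {t. x' + t *\<^sub>R u \<in> B}\<bar> / 2"
    using q unfolding steiner_def by auto
  note cA = chord_props[OF u A a0, folded x]
  note cB = chord_props[OF u B b0, folded x']
  define iA where "iA = Inf {t. x + t *\<^sub>R u \<in> A}"
  define sA where "sA = Sup {t. x + t *\<^sub>R u \<in> A}"
  define iB where "iB = Inf {t. x' + t *\<^sub>R u \<in> B}"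
  define sB where "sB = Sup {t. x' + t *\<^sub>R u \<in> B}"
  have d: "(norm (x - x'))\<^sup>2 + (s - t)\<^sup>2 \<le> 1" if "x + s *\<^sub>R u \<in> A" "x' + t *\<^sub>R u \<in> B" for s t
  proof -
    have "dist (x + s *\<^sub>R u) (x' + t *\<^sub>R u) \<le> 1" using AB that by blast
    then have "(norm ((x + s *\<^sub>R u) - (x' + t *\<^sub>R u)))\<^sup>2 \<le> 1"
      by (simp add: dist_norm power_le_one)
    then show ?thesis using pyth_u[OF u cA(1) cB(1)] by simp
  qed
  have 1: "(norm (x - x'))\<^sup>2 + (sB - iA)\<^sup>2 \<le> 1"
  proof -
    have "(norm (x - x'))\<^sup>2 + (iA - sB)\<^sup>2 \<le> 1"
      using d cA(2) cB(3) unfolding iA_def sB_def by blast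
    then show ?thesis by (simp add: power2_commute)
  qed
  have 2: "(norm (x - x'))\<^sup>2 + (sA - iB)\<^sup>2 \<le> 1"
    using d cA(3) cB(2) unfolding sA_def iB_def by blast
  have "(norm (x - x'))\<^sup>2 + (y - y')\<^sup>2 \<le> 1"
    by (rule arith_key[OF 1 2]) (use cA cB y y' in \<open>auto simp: iA_def sA_def iB_def sB_def\<close>)
  then have "(norm (p - q))\<^sup>2 \<le> 1"
    using pyth_u[OF u cA(1) cB(1)] px qx by simp
  then show ?thesis
    by (simp add: dist_norm power_le_one_iff abs_square_le_1)
qed


lemma cdual_compact:
  fixes K :: "'a::euclidean_space set"
  assumes "k \<in> K"
  shows "compact (cdual K)"
proof -
  have "closed (cdual K)" unfolding cdual_def by (intro closed_INT) auto
  moreover have "cdual K \<subseteq> cball k 1" unfolding cdual_def using assms by auto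
  then have "bounded (cdual K)" using bounded_cball bounded_subset by blast
  ultimately show ?thesis using compact_eq_bounded_closed by blast
qed

lemma sub_chull: "A \<subseteq> chull A"
  unfolding chull_def cdual_def by (auto simp: dist_commute)

lemma emeasure_transl_real:
  fixes d :: real
  assumes "S \<in> sets borel"
  shows "emeasure lborel ((+) d -` S) = emeasure lborel S"
proof -
  have "emeasure (distr lborel borel ((+) d)) S = emeasure lborel ((+) d -` S \<inter> space lborel)"
    by (rule emeasure_distr) (use assms in auto)
  then show ?thesis by (simp add: lborel_distr_plus)
qed

theorem theorem2p3:
  fixes K :: "'a::euclidean_space set" and u :: 'a
  assumes "convex K" and "compact K" and "interior K \<noteq> {}"
    and "norm u = 1"
  shows "steiner u (cdual K) \<subseteq> chull (steiner u (cdual K))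
       \<and> chull (steiner u (cdual K)) \<subseteq> cdual (steiner u K)
       \<and> measure lebesgue (cdual K) \<le> measure lebesgue (cdual (steiner u K))"
proof -
  note u = assms(4)
  obtain k where k: "k \<in> K" using assms(3) interior_subset by blast
  define L where "L = cdual K"
  have cL: "compact L" unfolding L_def by (rule cdual_compact[OF k])
  have LK: "dist a b \<le> 1" if "a \<in> L" "b \<in> K" for a b
    using that unfolding L_def cdual_def by (auto simp: dist_commute)
  have SD: "dist p q \<le> 1" if "p \<in> steiner u L" "q \<in> steiner u K" for p q
    by (rule steiner_dist[OF u cL assms(2) LK that])
  have SLM: "steiner u L \<subseteq> cdual (steiner u K)"
    using SD unfolding cdual_def by (auto simp: dist_commute)
  have P2: "chull (steiner u L) \<subseteq> cdual (steiner u K)"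
  proof
    fix p assume p: "p \<in> chull (steiner u L)"
    show "p \<in> cdual (steiner u K)"
      unfolding cdual_def
    proof
      fix q assume q: "q \<in> steiner u K"
      have "q \<in> cdual (steiner u L)" using SD q unfolding cdual_def by auto
      then show "p \<in> cball q 1" using p unfolding chull_def cdual_def by auto
    qed
  qed
  define M where "M = cdual (steiner u K)"
  have kS: "proj_perp u k + 0 *\<^sub>R u \<in> steiner u K"
    unfolding steiner_def using k by force
  have cM: "compact M" unfolding M_def by (rule cdual_compact[OF kS])
  have LM: "steiner u L \<subseteq> M" using SLM M_def by simp
  have bL[measurable]: "L \<in> sets borel" using cL by (simp add: borel_compact)
  have bM[measurable]: "M \<in> sets borel" using cM by (simp add: borel_compact)
  have fib: "emeasure lborel {t. x + t *\<^sub>R u \<in> L} \<le> emeasure lborel {t. x + t *\<^sub>R u \<in> M}"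
    if xu: "x \<bullet> u = 0" for x
  proof (cases "{t. x + t *\<^sub>R u \<in> L} = {}")
    case True then show ?thesis by simp
  next
    case False
    then obtain s0 where s0: "x + s0 *\<^sub>R u \<in> L" by auto
    have uu: "u \<bullet> u = 1" using u by (simp add: dot_square_norm)
    have pa0: "proj_perp u (x + s0 *\<^sub>R u) = x"
      unfolding proj_perp_def by (simp add: inner_add_left xu uu)
    note c = chord_props[OF u cL s0, unfolded pa0]
    define iA where "iA = Inf {t. x + t *\<^sub>R u \<in> L}"
    define sA where "sA = Sup {t. x + t *\<^sub>R u \<in> L}"
    have "emeasure lborel {t. x + t *\<^sub>R u \<in> L} \<le> emeasure lborel {iA..sA}"
      by (rule emeasure_mono) (use c(5) in \<open>auto simp: iA_def sA_def\<close>)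
    also have "\<dots> = emeasure lborel {-(sA - iA)/2 .. (sA - iA)/2}"
    proof -
      have le: "iA \<le> sA" using c(4) by (simp add: iA_def sA_def)
      have "(sA - iA)/2 - (-(sA - iA)/2) = sA - iA" by (simp add: field_simps)
      then show ?thesis using le by simp
    qed
    also have "\<dots> \<le> emeasure lborel {t. x + t *\<^sub>R u \<in> M}"
    proof (rule emeasure_mono)
      show "{-(sA - iA)/2 .. (sA - iA)/2} \<subseteq> {t. x + t *\<^sub>R u \<in> M}"
      proof
        fix t assume t: "t \<in> {-(sA - iA)/2 .. (sA - iA)/2}"
        have "x + t *\<^sub>R u \<in> steiner u L"
          unfolding steiner_def
        proof (intro CollectI exI conjI)
          show "x \<in> proj_perp u ` L" using s0 pa0 by force
          show "\<bar>t\<bar> \<le> \<bar>Sup {t. x + t *\<^sub>R u \<in> L} - Inf {t. x + t *\<^sub>R u \<in> L}\<bar> / 2"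
            using t c(4) unfolding iA_def sA_def by auto
        qed simp
        then show "t \<in> {t. x + t *\<^sub>R u \<in> M}" using LM by auto
      qed
      show "{t. x + t *\<^sub>R u \<in> M} \<in> sets lborel" by measurable
    qed
    finally show ?thesis .
  qed
  have fibz: "emeasure lborel {t. z + t *\<^sub>R u \<in> L} \<le> emeasure lborel {t. z + t *\<^sub>R u \<in> M}" for z
  proof -
    define x where "x = proj_perp u z"
    have uu: "u \<bullet> u = 1" using u by (simp add: dot_square_norm)
    have xu: "x \<bullet> u = 0" unfolding x_def proj_perp_def by (simp add: inner_diff_left uu)
    have eq: "{t. z + t *\<^sub>R u \<in> G} = (+) (z \<bullet> u) -` {t. x + t *\<^sub>R u \<in> G}" for G
      unfolding x_def proj_perp_def by (auto simp: algebra_simps)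
    have m: "{t. x + t *\<^sub>R u \<in> G} \<in> sets borel" if [measurable]: "G \<in> sets borel" for G
      by measurable
    show ?thesis
      unfolding eq emeasure_transl_real[OF m[OF bL]] emeasure_transl_real[OF m[OF bM]]
      by (rule fib[OF xu])
  qed
  have em: "emeasure lborel L \<le> emeasure lborel M"
    by (rule fiber_compare[OF u bL bM fibz])
  have P3: "measure lebesgue L \<le> measure lebesgue M"
  proof -
    have "measure lborel L \<le> measure lborel M"
      unfolding measure_def
      by (rule enn2real_mono[OF em]) (use emeasure_compact_finite[OF cM] in auto)
    then show ?thesis by simp
  qed
  show ?thesis
    using sub_chull P2 P3 unfolding L_def M_def by blast
qed

end
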